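(* Let $\pi:E\to\mathbb{R}^k$ be a fiber bundle, $L:J^1\pi\to\mathbb{R}$ a Lagrangian and ${\bf\Gamma}=(\Gamma_1,\dots,\Gamma_k)$ an integrable SOPDE on $J^1\pi$. Then $$\sum_{\alpha=1}^k\mathcal{L}_{\Gamma_\alpha}\Theta^\alpha_L=dL$$ if and only if $$\Gamma_\alpha\Big(\frac{\partial L}{\partial v^i_\alpha}\Big)-\frac{\partial L}{\partial q^i}=0,\qquad i=1,\dots,n.$$
   Context: $E$ is $(n+k)$-dimensional with adapted coordinates $(x^\alpha,q^i)$; $J^1\pi$ has induced coordinates $(x^\alpha,q^i,v^i_\alpha)$; summation over repeated indices. The Poincaré–Cartan $1$-forms are $\Theta^\alpha_L=L\,dx^\alpha+dL\circ S^\alpha$, where $S^\alpha$ is the canonical $(1,1)$-tensor field on $J^1\pi$ associated with $dx^\alpha$, locally $S^\alpha=(dq^i-v^i_\beta dx^\beta)\otimes\partial/\partial v^i_\alpha$; hence locally $\Theta^\alpha_L=\frac{\partial L}{\partial v^i_\alpha}(dq^i-v^i_\beta dx^\beta)+L\,dx^\alpha$. A SOPDE is a $k$-tuple of vector fields on $J^1\pi$ of the local form $\Gamma_\alpha=\partial/\partial x^\alpha+v^i_\alpha\partial/\partial q^i+\Gamma^i_{\alpha\beta}\partial/\partial v^i_\beta$ (equivalently $dx^\alpha(\Gamma_\beta)=\delta^\alpha_\beta$, $(dq^i-v^i_\gamma dx^\gamma)(\Gamma_\beta)=0$). Integrable means there is an integral section (a map $\psi:U\subset\mathbb{R}^k\to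 J^1\pi$ with $\psi_*(\partial/\partial x^\alpha)=\Gamma_\alpha\circ\psi$) through every point; the paper assumes throughout that integrable SOPDEs satisfy $[\Gamma_\alpha,\Gamma_\beta]=0$, equivalently $\Gamma^i_{\alpha\beta}=\Gamma^i_{\beta\alpha}$ and $\Gamma_\alpha(\Gamma^i_{\beta\gamma})=\Gamma_\beta(\Gamma^i_{\alpha\gamma})$. *)

theory Defs
  imports "HOL-Analysis.Analysis"
begin

text \<open>Local (adapted) coordinates on the first jet bundle J^1 pi of a fibre bundle
  pi : E -> R^k with fibre dimension n.  The index type 'a labels alpha = 1..k,
  the index type 'i labels i = 1..n.  A coordinate index is x^alpha, q^i or v^i_alpha.\<close>

type_synonym ('a, 'i) jidx = "'a + 'i + ('i \<times> 'a)"
type_synonym ('a, 'i) jpt = "real ^ ('a, 'i) jidx"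

definition Xc :: "'a \<Rightarrow> ('a, 'i) jidx" where "Xc a = Inl a"
definition Qc :: "'i \<Rightarrow> ('a, 'i) jidx" where "Qc i = Inr (Inl i)"
definition Vc :: "'i \<Rightarrow> 'a \<Rightarrow> ('a, 'i) jidx" where "Vc i a = Inr (Inr (i, a))"

definition pd :: "(('a::finite, 'i::finite) jpt \<Rightarrow> real) \<Rightarrow> ('a, 'i) jidx \<Rightarrow> ('a, 'i) jpt \<Rightarrow> real" where
  "pd f c p = deriv (\<lambda>t. f (p + t *\<^sub>R axis c 1)) 0"

fun Ck_on :: "nat \<Rightarrow> ('a::finite, 'i::finite) jpt set \<Rightarrow> (('a, 'i) jpt \<Rightarrow> real) \<Rightarrow> bool" where
  "Ck_on 0 U f = continuous_on U f"
| "Ck_on (Suc k) U f = (f differentiable_on U \<and> (\<forall>c. Ck_on k U (pd f c)))"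

definition smooth_on :: "('a::finite, 'i::finite) jpt set \<Rightarrow> (('a, 'i) jpt \<Rightarrow> real) \<Rightarrow> bool" where
  "smooth_on U f = (\<forall>k. Ck_on k U f)"

text \<open>Vector fields and 1-forms on J^1 pi, given by their components in the coordinate
  frames (d/dz^c) and (dz^c) respectively.\<close>
type_synonym ('a, 'i) vfield = "('a, 'i) jpt \<Rightarrow> real ^ ('a, 'i) jidx"
type_synonym ('a, 'i) oneform = "('a, 'i) jpt \<Rightarrow> real ^ ('a, 'i) jidx"

definition smooth_vf :: "('a::finite, 'i::finite) jpt set \<Rightarrow> ('a, 'i) vfield \<Rightarrow> bool" where
  "smooth_vf U X = (\<forall>c. smooth_on U (\<lambda>p. X p $ c))"

definition vf_app :: "('a::finite, 'i::finite) vfield \<Rightarrow> (('a, 'i) jpt \<Rightarrow> real) \<Rightarrow> ('a, 'i) jpt \<Rightarrow> real" where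
  "vf_app X f p = (\<Sum>c\<in>UNIV. X p $ c * pd f c p)"

definition lie_bracket :: "('a::finite, 'i::finite) vfield \<Rightarrow> ('a, 'i) vfield \<Rightarrow> ('a, 'i) vfield" where
  "lie_bracket X Y p = (\<chi> c. vf_app X (\<lambda>q. Y q $ c) p - vf_app Y (\<lambda>q. X q $ c) p)"

definition dfun :: "(('a::finite, 'i::finite) jpt \<Rightarrow> real) \<Rightarrow> ('a, 'i) oneform" where
  "dfun f p = (\<chi> c. pd f c p)"

definition lie_deriv1 :: "('a::finite, 'i::finite) vfield \<Rightarrow> ('a, 'i) oneform \<Rightarrow> ('a, 'i) oneform" where
  "lie_deriv1 X w p = (\<chi> c. vf_app X (\<lambda>q. w q $ c) p + (\<Sum>m\<in>UNIV. w p $ m * pd (\<lambda>q. X q $ m) c p))"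

definition dx :: "'a \<Rightarrow> ('a::finite, 'i::finite) oneform" where
  "dx a p = axis (Xc a) 1"

definition dq :: "'i \<Rightarrow> ('a::finite, 'i::finite) oneform" where
  "dq i p = axis (Qc i) 1"

definition contact :: "'i \<Rightarrow> ('a::finite, 'i::finite) oneform" where
  "contact i p = dq i p - (\<Sum>b\<in>UNIV. (p $ Vc i b) *\<^sub>R dx b p)"

definition Theta :: "(('a::finite, 'i::finite) jpt \<Rightarrow> real) \<Rightarrow> 'a \<Rightarrow> ('a, 'i) oneform" where
  "Theta L a p = (\<Sum>i\<in>UNIV. pd L (Vc i a) p *\<^sub>R contact i p) + L p *\<^sub>R dx a p"

text \<open>SOPDE on U: a k-tuple of smooth vector fields with dx^alpha(Gamma_beta) = delta and
  (dq^i - v^i_gamma dx^gamma)(Gamma_beta) = 0, i.e. Gamma_beta^{x^alpha} = delta, Gamma_beta^{q^i} = v^i_beta.\<close>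
definition is_SOPDE :: "('a::finite, 'i::finite) jpt set \<Rightarrow> ('a \<Rightarrow> ('a, 'i) vfield) \<Rightarrow> bool" where
  "is_SOPDE U G = ((\<forall>a. smooth_vf U (G a)) \<and>
     (\<forall>p\<in>U. \<forall>a b. G b p $ Xc a = (if a = b then 1 else 0)) \<and>
     (\<forall>p\<in>U. \<forall>i b. G b p $ Qc i = p $ Vc i b))"

definition integral_section ::
  "('a::finite, 'i::finite) jpt set \<Rightarrow> ('a \<Rightarrow> ('a, 'i) vfield) \<Rightarrow> (real ^ 'a) set \<Rightarrow> (real ^ 'a \<Rightarrow> ('a, 'i) jpt) \<Rightarrow> bool" where
  "integral_section U G V psi = (open V \<and> psi ` V \<subseteq> U \<and>
     (\<forall>x\<in>V. (psi has_derivative (\<lambda>h. \<Sum>a\<in>UNIV. (h $ a) *\<^sub>R G a (psi x))) (at x)))"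

text \<open>Integrable SOPDE: integral section through every point; following the paper's standing
  convention, integrable SOPDEs moreover satisfy [Gamma_alpha, Gamma_beta] = 0.\<close>
definition integrable_SOPDE :: "('a::finite, 'i::finite) jpt set \<Rightarrow> ('a \<Rightarrow> ('a, 'i) vfield) \<Rightarrow> bool" where
  "integrable_SOPDE U G = (is_SOPDE U G \<and>
     (\<forall>p\<in>U. \<exists>V psi x0. integral_section U G V psi \<and> x0 \<in> V \<and> psi x0 = p) \<and>
     (\<forall>a b. \<forall>p\<in>U. lie_bracket (G a) (G b) p = 0))"

end

theory Submission imports Defs begin

lemma pd_hd:
  fixes f :: "('a::finite, 'i::finite) jpt \<Rightarrow> real"
  assumes "(f has_derivative f') (at p)"
  shows "pd f c p = f' (axis c 1)"
proof -
  have lin: "linear f'" using assms has_derivative_linear by blast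
  have d1: "((\<lambda>t::real. p + t *\<^sub>R axis c 1) has_derivative (\<lambda>t. t *\<^sub>R axis c 1)) (at 0)"
    by (auto intro!: derivative_eq_intros)
  have "((\<lambda>t. f (p + t *\<^sub>R axis c 1)) has_derivative (\<lambda>t. f' (t *\<^sub>R axis c 1))) (at 0)"
    using diff_chain_at[OF d1, of f f'] assms by (simp add: o_def)
  moreover have "(\<lambda>t. f' (t *\<^sub>R axis c 1)) = (\<lambda>t. f' (axis c 1) * t)"
    using linear_scale[OF lin] by (auto simp: mult.commute)
  ultimately have "((\<lambda>t. f (p + t *\<^sub>R axis c 1)) has_field_derivative f' (axis c 1)) (at 0)"
    by (simp add: has_field_derivative_def)
  then show ?thesis unfolding pd_def by (rule DERIV_imp_deriv)
qed

lemma vf_app_hd: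
  fixes f :: "('a::finite, 'i::finite) jpt \<Rightarrow> real"
  assumes "(f has_derivative f') (at p)"
  shows "vf_app X f p = f' (X p)"
proof -
  have lin: "linear f'" using assms has_derivative_linear by blast
  have "vf_app X f p = (\<Sum>c\<in>UNIV. f' (X p $ c *\<^sub>R axis c 1))"
    unfolding vf_app_def pd_hd[OF assms] using linear_scale[OF lin] by simp
  also have "\<dots> = f' (\<Sum>c\<in>UNIV. X p $ c *\<^sub>R axis c 1)"
    using linear_sum[OF lin, of "\<lambda>c. X p $ c *\<^sub>R axis c 1" UNIV] by simp
  also have "(\<Sum>c\<in>UNIV. X p $ c *\<^sub>R axis c 1) = X p"
    using basis_expansion[of "X p"] by (simp add: scalar_mult_eq_scaleR)
  finally show ?thesis .
qed

lemma sum_jidx: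
  "(\<Sum>c\<in>UNIV. f c) = (\<Sum>a\<in>UNIV. f (Xc a)) + (\<Sum>i\<in>UNIV. f (Qc i)) + (\<Sum>i\<in>UNIV. \<Sum>a\<in>UNIV. f (Vc i a))"
  for f :: "('a::finite, 'i::finite) jidx \<Rightarrow> 'b::comm_monoid_add"
proof -
  have "(\<Sum>c\<in>UNIV. f c) = (\<Sum>c\<in>UNIV <+> UNIV. f c)" by simp
  also have "\<dots> = (\<Sum>a\<in>UNIV. f (Xc a)) + (\<Sum>c\<in>UNIV. f (Inr c))"
    by (subst sum.Plus) (auto simp: Xc_def o_def)
  also have "(\<Sum>c\<in>UNIV. f (Inr c)) = (\<Sum>c\<in>UNIV <+> UNIV. f (Inr c))" by simp
  also have "\<dots> = (\<Sum>i\<in>UNIV. f (Qc i)) + (\<Sum>c\<in>UNIV. f (Inr (Inr c)))"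
    by (subst sum.Plus) (auto simp: Qc_def o_def)
  also have "(\<Sum>c\<in>UNIV. f (Inr (Inr c))) = (\<Sum>i\<in>UNIV. \<Sum>a\<in>UNIV. f (Vc i a))"
    unfolding Vc_def by (simp add: sum.cartesian_product UNIV_Times_UNIV[symmetric] del: UNIV_Times_UNIV)
  finally show ?thesis by (simp add: add.assoc)
qed

lemma jidx_cases: "(\<exists>b. c = Xc b) \<or> (\<exists>i. c = Qc i) \<or> (\<exists>i b. c = Vc i b)"
proof (cases c)
  case (Inl b) then show ?thesis by (auto simp: Xc_def)
next
  case (Inr x) then show ?thesis
  proof (cases x)
    case (Inl i) then show ?thesis using \<open>c = Inr x\<close> by (auto simp: Qc_def)
  next
    case (Inr y) then show ?thesis using \<open>c = Inr x\<close> by (cases y) (auto simp: Vc_def)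
  qed
qed

lemma mult_if01[simp]: "(f::real) * (if P then 1 else 0) = (if P then f else 0)" by simp
lemma if_conj0: "(if P \<and> Q then x else 0) = (if P then (if Q then x else 0) else 0)" by simp
lemma mult_if0: "(f::real) * (if P then x else 0) = (if P then f * x else 0)" by simp
lemma if01_mult: "(if P then 1 else 0) * (f::real) = (if P then f else 0)" by simp
lemma if_app: "(if P then f else g) x = (if P then f x else g x)" by simp


lemma idx_distinct[simp]:
  "Xc a \<noteq> Qc i" "Qc i \<noteq> Xc a" "Xc a \<noteq> Vc i b" "Vc i b \<noteq> Xc a" "Qc i \<noteq> Vc j b" "Vc j b \<noteq> Qc i"
  "(Xc a = Xc a') = (a = a')" "(Qc i = Qc i') = (i = i')" "(Vc i b = Vc i' b') = (i = i' \<and> b = b')"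
  by (auto simp: Xc_def Qc_def Vc_def)

lemma Theta_X: "Theta L a q $ Xc b = L q * (if a = b then 1 else 0) - (\<Sum>i\<in>UNIV. pd L (Vc i a) q * q $ Vc i b)"
  by (simp add: Theta_def contact_def dq_def dx_def axis_def sum_component sum_subtractf sum_negf)
lemma Theta_Q: "Theta L a q $ Qc j = pd L (Vc j a) q"
  by (simp add: Theta_def contact_def dq_def dx_def axis_def sum_component if_app)
lemma Theta_V: "Theta L a q $ Vc j b = 0"
  by (simp add: Theta_def contact_def dq_def dx_def axis_def sum_component)

lemma pointwise:
  fixes U :: "('a::finite, 'i::finite) jpt set"
    and L :: "('a, 'i) jpt \<Rightarrow> real"
    and G :: "'a \<Rightarrow> ('a, 'i) vfield"
  assumes U: "open U" and sL: "smooth_on U L" and iG: "integrable_SOPDE U G" and p: "p \<in> U"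
  shows "(\<Sum>a\<in>UNIV. lie_deriv1 (G a) (Theta L a) p) $ Qc j = (\<Sum>a\<in>UNIV. vf_app (G a) (pd L (Vc j a)) p)"
    and "(\<Sum>a\<in>UNIV. lie_deriv1 (G a) (Theta L a) p) $ Vc j b = pd L (Vc j b) p"
    and "(\<Sum>a\<in>UNIV. lie_deriv1 (G a) (Theta L a) p) $ Xc b = pd L (Xc b) p
          + (\<Sum>i\<in>UNIV. p $ Vc i b * (pd L (Qc i) p - (\<Sum>a\<in>UNIV. vf_app (G a) (pd L (Vc i a)) p)))"
proof -
  have S: "is_SOPDE U G" and br: "\<forall>a b. \<forall>p\<in>U. lie_bracket (G a) (G b) p = 0"
    using iG unfolding integrable_SOPDE_def by auto
  have c1: "Ck_on 1 U L" and c2: "Ck_on 2 U L" using sL unfolding smooth_on_def by auto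
  have "L differentiable_on U" using c1 by simp
  then have "L differentiable (at p)" using U p by (simp add: differentiable_on_eq_differentiable_at)
  then obtain DL where hL: "(L has_derivative DL) (at p)" unfolding differentiable_def by blast
  have "\<And>c. pd L c differentiable_on U" using c2 by (simp add: numeral_2_eq_2)
  then have "\<And>c. pd L c differentiable (at p)" using U p by (simp add: differentiable_on_eq_differentiable_at)
  then obtain DV where hV: "\<And>c. (pd L c has_derivative DV c) (at p)" unfolding differentiable_def by metis
  have hGX: "((\<lambda>q. G a q $ Xc b) has_derivative (\<lambda>h. 0)) (at p)" for a b
    by (rule has_derivative_transform_within_open[OF has_derivative_const U p, of "if b = a then 1 else 0"])
       (use S in \<open>auto simp: is_SOPDE_def\<close>)
  have hGQ: "((\<lambda>q. G a q $ Qc i) has_derivative (\<lambda>h. h $ Vc i a)) (at p)" for a i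
    by (rule has_derivative_transform_within_open[OF _ U p, of "\<lambda>q. q $ Vc i a"])
       (use S in \<open>auto simp: is_SOPDE_def intro: bounded_linear_imp_has_derivative\<close>)
  have sym: "G a p $ Vc i b = G b p $ Vc i a" for a b i
  proof -
    have "lie_bracket (G a) (G b) p $ Qc i = 0" using br p by simp
    then show ?thesis unfolding lie_bracket_def using vf_app_hd[OF hGQ] by simp
  qed
  have M: "(\<Sum>m\<in>UNIV. Theta L a p $ m * pd (\<lambda>q. G a q $ m) c p)
          = (\<Sum>i\<in>UNIV. pd L (Vc i a) p * axis c 1 $ Vc i a)" for a c
    by (subst sum_jidx) (simp add: pd_hd[OF hGX] pd_hd[OF hGQ] Theta_V Theta_Q)
  have LD: "(\<Sum>a\<in>UNIV. lie_deriv1 (G a) (Theta L a) p) $ c =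
      (\<Sum>a\<in>UNIV. vf_app (G a) (\<lambda>q. Theta L a q $ c) p + (\<Sum>i\<in>UNIV. pd L (Vc i a) p * axis c 1 $ Vc i a))" for c
    by (simp add: lie_deriv1_def sum_component M)
  show "(\<Sum>a\<in>UNIV. lie_deriv1 (G a) (Theta L a) p) $ Qc j = (\<Sum>a\<in>UNIV. vf_app (G a) (pd L (Vc j a)) p)"
    unfolding LD Theta_Q by (simp add: axis_def)
  show "(\<Sum>a\<in>UNIV. lie_deriv1 (G a) (Theta L a) p) $ Vc j b = pd L (Vc j b) p"
  proof -
    have "vf_app (G a) (\<lambda>q. 0) p = 0" for a
      by (rule trans[OF vf_app_hd[OF has_derivative_const]]) simp
    then show ?thesis unfolding LD Theta_V by (simp add: axis_def if_conj0 mult_if0)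
  qed
  show "(\<Sum>a\<in>UNIV. lie_deriv1 (G a) (Theta L a) p) $ Xc b = pd L (Xc b) p
          + (\<Sum>i\<in>UNIV. p $ Vc i b * (pd L (Qc i) p - (\<Sum>a\<in>UNIV. vf_app (G a) (pd L (Vc i a)) p)))"
  proof -
    define E where "E i a = vf_app (G a) (pd L (Vc i a)) p" for i a
    define Lv where "Lv i a = pd L (Vc i a) p" for i a
    have hT: "((\<lambda>q. Theta L a q $ Xc b) has_derivative (\<lambda>h. DL h * (if a = b then 1 else 0)
        - (\<Sum>i\<in>UNIV. pd L (Vc i a) p * h $ Vc i b + DV (Vc i a) h * p $ Vc i b))) (at p)" for a
      unfolding Theta_X
      by (intro derivative_eq_intros) (auto intro: hL hV bounded_linear_imp_has_derivative)
    have T: "vf_app (G a) (\<lambda>q. Theta L a q $ Xc b) p = DL (G a p) * (if a = b then 1 else 0)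
        - (\<Sum>i\<in>UNIV. Lv i a * G a p $ Vc i b + E i a * p $ Vc i b)" for a
      unfolding vf_app_hd[OF hT] E_def Lv_def vf_app_hd[OF hV] ..
    have DLb: "DL (G b p) = pd L (Xc b) p + (\<Sum>i\<in>UNIV. p $ Vc i b * pd L (Qc i) p)
        + (\<Sum>i\<in>UNIV. \<Sum>a\<in>UNIV. G a p $ Vc i b * Lv i a)"
    proof -
      have "DL (G b p) = vf_app (G b) L p" by (rule vf_app_hd[OF hL, symmetric])
      also have "\<dots> = pd L (Xc b) p + (\<Sum>i\<in>UNIV. p $ Vc i b * pd L (Qc i) p)
        + (\<Sum>i\<in>UNIV. \<Sum>a\<in>UNIV. G b p $ Vc i a * Lv i a)"
        unfolding vf_app_def Lv_def by (subst sum_jidx) (use S p in \<open>simp add: is_SOPDE_def if01_mult\<close>)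
      finally show ?thesis by (simp add: sym)
    qed
    have "(\<Sum>a\<in>UNIV. lie_deriv1 (G a) (Theta L a) p) $ Xc b
        = DL (G b p) - (\<Sum>a\<in>UNIV. \<Sum>i\<in>UNIV. Lv i a * G a p $ Vc i b) - (\<Sum>a\<in>UNIV. \<Sum>i\<in>UNIV. E i a * p $ Vc i b)"
      unfolding LD T by (simp add: axis_def sum.distrib sum_subtractf mult_if0)
    also have "\<dots> = pd L (Xc b) p + (\<Sum>i\<in>UNIV. p $ Vc i b * (pd L (Qc i) p - (\<Sum>a\<in>UNIV. E i a)))"
    proof -
      have 1: "(\<Sum>a\<in>UNIV. \<Sum>i\<in>UNIV. Lv i a * G a p $ Vc i b) = (\<Sum>i\<in>UNIV. \<Sum>a\<in>UNIV. G a p $ Vc i b * Lv i a)"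
        by (subst sum.swap) (simp add: mult.commute)
      have 2: "(\<Sum>a\<in>UNIV. \<Sum>i\<in>UNIV. E i a * p $ Vc i b) = (\<Sum>i\<in>UNIV. p $ Vc i b * (\<Sum>a\<in>UNIV. E i a))"
        unfolding sum_distrib_right mult.commute[of "p $ _"] by (rule sum.swap)
      have 3: "(\<Sum>i\<in>UNIV. p $ Vc i b * (pd L (Qc i) p - (\<Sum>a\<in>UNIV. E i a)))
          = (\<Sum>i\<in>UNIV. p $ Vc i b * pd L (Qc i) p) - (\<Sum>i\<in>UNIV. p $ Vc i b * (\<Sum>a\<in>UNIV. E i a))"
        by (simp add: right_diff_distrib sum_subtractf)
      show ?thesis unfolding DLb 1 2 3 by simp
    qed
    finally show ?thesis unfolding E_def .
  qed
qed

theorem mainTheorem3: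
  fixes U :: "('a::finite, 'i::finite) jpt set"
    and L :: "('a, 'i) jpt \<Rightarrow> real"
    and G :: "'a \<Rightarrow> ('a, 'i) vfield"
  assumes "open U"
    and "smooth_on U L"
    and "integrable_SOPDE U G"
  shows "(\<forall>p\<in>U. (\<Sum>a\<in>UNIV. lie_deriv1 (G a) (Theta L a) p) = dfun L p) \<longleftrightarrow>
         (\<forall>p\<in>U. \<forall>i. (\<Sum>a\<in>UNIV. vf_app (G a) (pd L (Vc i a)) p) - pd L (Qc i) p = 0)"
proof
  assume H: "\<forall>p\<in>U. (\<Sum>a\<in>UNIV. lie_deriv1 (G a) (Theta L a) p) = dfun L p"
  show "\<forall>p\<in>U. \<forall>i. (\<Sum>a\<in>UNIV. vf_app (G a) (pd L (Vc i a)) p) - pd L (Qc i) p = 0"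
  proof (intro ballI allI)
    fix p i assume p: "p \<in> U"
    have "(\<Sum>a\<in>UNIV. lie_deriv1 (G a) (Theta L a) p) $ Qc i = dfun L p $ Qc i" using H p by simp
    then show "(\<Sum>a\<in>UNIV. vf_app (G a) (pd L (Vc i a)) p) - pd L (Qc i) p = 0"
      using pointwise(1)[OF assms p] by (simp add: dfun_def)
  qed
next
  assume H: "\<forall>p\<in>U. \<forall>i. (\<Sum>a\<in>UNIV. vf_app (G a) (pd L (Vc i a)) p) - pd L (Qc i) p = 0"
  show "\<forall>p\<in>U. (\<Sum>a\<in>UNIV. lie_deriv1 (G a) (Theta L a) p) = dfun L p"
  proof (intro ballI)
    fix p assume p: "p \<in> U"
    show "(\<Sum>a\<in>UNIV. lie_deriv1 (G a) (Theta L a) p) = dfun L p"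
    proof (rule vec_eq_iff[THEN iffD2], rule allI)
      fix c :: "('a, 'i) jidx"
      from jidx_cases[of c] show "(\<Sum>a\<in>UNIV. lie_deriv1 (G a) (Theta L a) p) $ c = dfun L p $ c"
      proof (elim disjE exE)
        fix b assume "c = Xc b"
        then show ?thesis using pointwise(3)[OF assms p, of b] H p by (simp add: dfun_def)
      next
        fix i assume "c = Qc i"
        then show ?thesis using pointwise(1)[OF assms p, of i] H p by (simp add: dfun_def)
      next
        fix i b assume "c = Vc i b"
        then show ?thesis using pointwise(2)[OF assms p, of i b] by (simp add: dfun_def)
      qed
    qed
  qed
qed

end
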